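(* Let $k$ be a field, $V$ a $k$-vector space, and $\varphi\in\operatorname{End}_k(V)$ a finite potent endomorphism with core-nilpotent decomposition $\varphi=\varphi_1+\varphi_2$. Then the Drazin inverse $\varphi^D$ of $\varphi$ is a G-Drazin inverse of $\varphi_1$.
   Context: An endomorphism $\varphi$ of a $k$-vector space $V$ is finite potent if $\varphi^n(V)$ is finite dimensional for some $n$. For such $\varphi$, the AST-decomposition is $V=U_\varphi\oplus W_\varphi$ where $U_\varphi=\{v\in V: \varphi^m(v)=0 \text{ for some } m\}$ and $W_\varphi=\{v\in V: p(\varphi)(v)=0 \text{ for some } p(x)\in k[x] \text{ coprime to } x\}$; $\varphi|_{U_\varphi}$ is nilpotent, $W_\varphi$ is finite dimensional and $\varphi|_{W_\varphi}$ is an automorphism. The index $i(\theta)$ of a finite potent $\theta$ is the nilpotency order of $\theta|_{U_\theta}$. The Drazin inverse $\varphi^D$ equals $(\varphi|_{W_\varphi})^{-1}$ on $W_\varphi$ and $0$ on $U_\varphi$. The core-nilpotent decomposition is $\varphi=\varphi_1+\varphi_2$ with $\varphi_1=\varphi\circ\varphi^D\circ\varphi$ and $\varphi_2=\varphi-\varphi_1$. An endomorphism $\psi$ is a G-Drazin inverse of a finite potent $\theta$ with $s=i(\theta)$ if $\theta\circ\psi\circ\theta=\theta$ and $\psi\circ\theta^{s}=\theta^{s}\circ\psi$. *)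

theory Defs
  imports "HOL-Computational_Algebra.Polynomial"
begin

text \<open>A k-vector space V is modelled by a type 'v with a scalar multiplication
  scale :: 'k \<Rightarrow> 'v \<Rightarrow> 'v satisfying the locale vector_space; endomorphisms are
  the k-linear maps 'v \<Rightarrow> 'v.\<close>

definition endo :: "('k::field \<Rightarrow> 'v::ab_group_add \<Rightarrow> 'v) \<Rightarrow> ('v \<Rightarrow> 'v) \<Rightarrow> bool" where
  "endo scale f \<longleftrightarrow> Vector_Spaces.linear scale scale f"

definition fin_dim_set :: "('k::field \<Rightarrow> 'v::ab_group_add \<Rightarrow> 'v) \<Rightarrow> 'v set \<Rightarrow> bool" where
  "fin_dim_set scale S \<longleftrightarrow> (\<exists>B. finite B \<and> S \<subseteq> module.span scale B)"

definition finite_potent :: "('k::field \<Rightarrow> 'v::ab_group_add \<Rightarrow> 'v) \<Rightarrow> ('v \<Rightarrow> 'v) \<Rightarrow> bool" where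
  "finite_potent scale f \<longleftrightarrow> endo scale f \<and> (\<exists>n. fin_dim_set scale (range (f ^^ n)))"

definition poly_endo :: "('k::field \<Rightarrow> 'v::ab_group_add \<Rightarrow> 'v) \<Rightarrow> 'k poly \<Rightarrow> ('v \<Rightarrow> 'v) \<Rightarrow> 'v \<Rightarrow> 'v" where
  "poly_endo scale p f v = (\<Sum>i\<le>degree p. scale (coeff p i) ((f ^^ i) v))"

definition U_part :: "('v::ab_group_add \<Rightarrow> 'v) \<Rightarrow> 'v set" where
  "U_part f = {v. \<exists>m. (f ^^ m) v = 0}"

definition W_part :: "('k::field \<Rightarrow> 'v::ab_group_add \<Rightarrow> 'v) \<Rightarrow> ('v \<Rightarrow> 'v) \<Rightarrow> 'v set" where
  "W_part scale f = {v. \<exists>p::'k poly. coprime p [:0, 1:] \<and> poly_endo scale p f v = 0}"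

definition index :: "('v::ab_group_add \<Rightarrow> 'v) \<Rightarrow> nat" where
  "index f = (LEAST s. \<forall>v\<in>U_part f. (f ^^ s) v = 0)"

text \<open>Drazin inverse: for v = u + w (u \<in> U_f, w \<in> W_f), f^D v is the unique
  element of W_f mapped by f to w (i.e. (f|W_f)^{-1} w), and f^D vanishes on U_f.\<close>
definition drazin :: "('k::field \<Rightarrow> 'v::ab_group_add \<Rightarrow> 'v) \<Rightarrow> ('v \<Rightarrow> 'v) \<Rightarrow> 'v \<Rightarrow> 'v" where
  "drazin scale f v = (THE y. y \<in> W_part scale f \<and>
      (\<exists>u\<in>U_part f. \<exists>w\<in>W_part scale f. v = u + w \<and> f y = w))"

definition core_part :: "('k::field \<Rightarrow> 'v::ab_group_add \<Rightarrow> 'v) \<Rightarrow> ('v \<Rightarrow> 'v) \<Rightarrow> 'v \<Rightarrow> 'v" where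
  "core_part scale f = f \<circ> drazin scale f \<circ> f"

definition nilpotent_part :: "('k::field \<Rightarrow> 'v::ab_group_add \<Rightarrow> 'v) \<Rightarrow> ('v \<Rightarrow> 'v) \<Rightarrow> 'v \<Rightarrow> 'v" where
  "nilpotent_part scale f = (\<lambda>v. f v - core_part scale f v)"

definition G_drazin_inverse :: "('k::field \<Rightarrow> 'v::ab_group_add \<Rightarrow> 'v) \<Rightarrow> ('v \<Rightarrow> 'v) \<Rightarrow> ('v \<Rightarrow> 'v) \<Rightarrow> bool" where
  "G_drazin_inverse scale \<theta> \<psi> \<longleftrightarrow> finite_potent scale \<theta> \<and> endo scale \<psi> \<and>
     \<theta> \<circ> \<psi> \<circ> \<theta> = \<theta> \<and> \<psi> \<circ> (\<theta> ^^ index \<theta>) = (\<theta> ^^ index \<theta>) \<circ> \<psi>"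

end

theory Submission
  imports Defs "HOL-Computational_Algebra.Computational_Algebra"
begin

locale fpot = vector_space scale for scale :: "'k::field \<Rightarrow> 'v::ab_group_add \<Rightarrow> 'v" +
  fixes f :: "'v \<Rightarrow> 'v"
  assumes fadd: "f (x + y) = f x + f y" and fscale: "f (scale c x) = scale c (f x)"
begin

lemma f0: "f 0 = 0"
proof -
  have "f 0 + f 0 = f 0 + 0" using fadd[of 0 0] by simp
  then show ?thesis by simp
qed

lemma fdiff: "f (x - y) = f x - f y"
  using fadd[of "x - y" y] by (simp add: algebra_simps)

lemma fpow_add: "(f ^^ k) (x + y) = (f ^^ k) x + (f ^^ k) y"
  by (induction k) (simp_all add: fadd)

lemma fpow_scale: "(f ^^ k) (scale c x) = scale c ((f ^^ k) x)"
  by (induction k) (simp_all add: fscale)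

lemma fpow0: "(f ^^ k) 0 = 0"
  by (induction k) (simp_all add: f0)

lemma fpow_comm: "(f ^^ k) (f x) = f ((f ^^ k) x)"
  by (simp add: funpow_swap1)

lemma pe_ext:
  assumes "degree p \<le> N"
  shows "poly_endo scale p f v = (\<Sum>i\<le>N. scale (coeff p i) ((f ^^ i) v))"
  unfolding poly_endo_def
  by (rule sum.mono_neutral_left) (use assms in \<open>auto simp: coeff_eq_0\<close>)

lemma pe_pCons: "poly_endo scale (pCons a p) f v = scale a v + poly_endo scale p f (f v)"
proof -
  have "poly_endo scale (pCons a p) f v = (\<Sum>i\<le>Suc (degree p). scale (coeff (pCons a p) i) ((f ^^ i) v))"
    by (rule pe_ext) (simp add: degree_pCons_le)
  also have "\<dots> = scale a v + (\<Sum>i\<le>degree p. scale (coeff p i) ((f ^^ i) (f v)))"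
    by (subst sum.atMost_Suc_shift) (simp add: funpow_Suc_right del: funpow.simps)
  also have "\<dots> = scale a v + poly_endo scale p f (f v)"
    by (simp add: poly_endo_def)
  finally show ?thesis .
qed

lemma pe_zero_p [simp]: "poly_endo scale 0 f v = 0"
  by (simp add: poly_endo_def)

lemma pe_zero_v [simp]: "poly_endo scale p f 0 = 0"
  by (induction p) (simp_all add: pe_pCons f0)

lemma pe_add_v: "poly_endo scale p f (x + y) = poly_endo scale p f x + poly_endo scale p f y"
  by (induction p arbitrary: x y) (simp_all add: pe_pCons fadd scale_right_distrib algebra_simps)

lemma pe_scale_v: "poly_endo scale p f (scale c x) = scale c (poly_endo scale p f x)"
  by (induction p arbitrary: x) (simp_all add: pe_pCons fscale scale_right_distrib mult.commute)

lemma pe_diff_v: "poly_endo scale p f (x - y) = poly_endo scale p f x - poly_endo scale p f y"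
  using pe_add_v[of p "x - y" y] by (simp add: algebra_simps)

lemma pe_comm: "poly_endo scale p f (f v) = f (poly_endo scale p f v)"
  by (induction p arbitrary: v) (simp_all add: pe_pCons fadd fscale f0)

lemma pe_add_p: "poly_endo scale (p + q) f v = poly_endo scale p f v + poly_endo scale q f v"
proof (induction p arbitrary: q v)
  case 0 then show ?case by simp
next
  case (pCons a p)
  show ?case
  proof (cases q)
    case (pCons b q')
    have ih: "poly_endo scale (p + q') f (f v) = poly_endo scale p f (f v) + poly_endo scale q' f (f v)"
      by (rule pCons.IH)
    show ?thesis using ih by (simp add: \<open>q = pCons b q'\<close> pe_pCons scale_left_distrib algebra_simps)
  qed
qed

lemma pe_smult: "poly_endo scale (smult c p) f v = scale c (poly_endo scale p f v)"
  by (induction p arbitrary: v) (simp_all add: pe_pCons scale_right_distrib)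

lemma pe_mult: "poly_endo scale (p * q) f v = poly_endo scale p f (poly_endo scale q f v)"
proof (induction p arbitrary: v)
  case 0 then show ?case by simp
next
  case (pCons a p)
  have "poly_endo scale (pCons a p * q) f v = poly_endo scale (smult a q + pCons 0 (p * q)) f v"
    by simp
  also have "\<dots> = scale a (poly_endo scale q f v) + poly_endo scale p f (poly_endo scale q f (f v))"
    by (simp add: pe_add_p pe_smult pe_pCons pCons.IH)
  also have "\<dots> = poly_endo scale (pCons a p) f (poly_endo scale q f v)"
    by (simp add: pe_pCons pe_comm)
  finally show ?case .
qed

lemma pe_one [simp]: "poly_endo scale 1 f v = v"
  by (simp add: poly_endo_def)

lemma pe_x [simp]: "poly_endo scale [:0, 1:] f v = f v"
  by (simp add: pe_pCons)

lemma pe_xpow: "poly_endo scale ([:0, 1:] ^ k) f v = (f ^^ k) v"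
  by (induction k arbitrary: v) (simp_all add: pe_pCons fpow_comm)

lemma pe_monom: "poly_endo scale (monom c k) f v = scale c ((f ^^ k) v)"
proof (induction k arbitrary: v)
  case 0 then show ?case by (simp add: monom_0 pe_pCons)
next
  case (Suc k) then show ?case
    by (simp add: monom_Suc pe_pCons fpow_comm fscale)
qed

lemma pe_sum: "poly_endo scale (\<Sum>i<(k::nat). g i) f v = (\<Sum>i<k. poly_endo scale (g i) f v)"
  by (induction k) (simp_all add: pe_add_p)

lemma pe_diff_p: "poly_endo scale (p - q) f v = poly_endo scale p f v - poly_endo scale q f v"
  using pe_add_p[of "p - q" q v] by (simp add: algebra_simps)


lemma span_img_repr:
  "x \<in> span (g ` {..<(k::nat)}) \<Longrightarrow> \<exists>c. x = (\<Sum>i<k. scale (c i) (g i))"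
proof (induction k arbitrary: x)
  case 0 then show ?case by simp
next
  case (Suc k)
  from Suc.prems obtain a where "x - scale a (g k) \<in> span (g ` {..<k})"
    by (auto simp: lessThan_Suc span_insert)
  from Suc.IH[OF this] obtain c where c: "x - scale a (g k) = (\<Sum>i<k. scale (c i) (g i))" by blast
  have "x = (\<Sum>i<Suc k. scale ((c(k := a)) i) (g i))"
    using c by (simp add: algebra_simps)
  then show ?case by blast
qed

lemma exists_dep:
  assumes "finite B" and "\<And>i. g i \<in> span B"
  shows "\<exists>k c. g k = (\<Sum>i<(k::nat). scale (c i) (g i))"
proof (rule ccontr)
  assume na: "\<not> ?thesis"
  have nsp: "g k \<notin> span (g ` {..<k})" for k
    using span_img_repr[of "g k" g k] na by blast
  have ind: "independent (g ` {..<k}) \<and> inj_on g {..<k}" for k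
  proof (induction k)
    case 0 then show ?case by (simp add: independent_empty)
  next
    case (Suc k)
    have ni: "g k \<notin> g ` {..<k}" using nsp[of k] span_superset[of "g ` {..<k}"] by blast
    have i1: "independent (insert (g k) (g ` {..<k}))"
      using Suc.IH nsp[of k] ni by (simp add: independent_insert)
    have i2: "inj_on g (insert k {..<k})"
      using Suc.IH ni by simp
    show ?case using i1 i2 by (simp add: lessThan_Suc)
  qed
  let ?k = "Suc (card B)"
  have "finite (g ` {..<?k}) \<and> card (g ` {..<?k}) \<le> card B"
    by (rule independent_span_bound) (use assms ind in auto)
  moreover have "card (g ` {..<?k}) = ?k" using ind[of ?k] by (simp add: card_image)
  ultimately show False by simp
qed

end

lemma coprime_X: "\<not> [:0, 1:] dvd (q::'k::field poly) \<Longrightarrow> coprime q [:0, 1:]"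
proof -
  assume a: "\<not> [:0, 1:] dvd q"
  have p: "prime_elem [:0, 1::'k:]" by (rule prime_elem_linear_field_poly) simp
  have "coprime [:0, 1:] q"
  proof (rule coprimeI)
    fix d assume d: "d dvd [:0, 1:]" "d dvd q"
    show "is_unit d"
    proof (rule ccontr)
      assume "\<not> is_unit d"
      then have "[:0, 1:] dvd d" using prime_elemD2[OF p d(1)] by blast
      then show False using d(2) a dvd_trans by blast
    qed
  qed
  then show ?thesis by (simp add: coprime_commute)
qed

lemma coprime_X_iff: "coprime (q::'k::field poly) [:0, 1:] \<longleftrightarrow> poly q 0 \<noteq> 0"
proof
  assume c: "coprime q [:0, 1:]"
  show "poly q 0 \<noteq> 0"
  proof
    assume "poly q 0 = 0"
    then have "[:0, 1:] dvd q" using dvd_iff_poly_eq_0[of 0 q] by simp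
    then have "is_unit [:0, 1::'k:]" by (rule coprime_common_divisor[OF c _ dvd_refl])
    then show False by (auto simp: is_unit_poly_iff)
  qed
next
  assume "poly q 0 \<noteq> 0"
  then have "\<not> [:0, 1:] dvd q" using dvd_iff_poly_eq_0[of 0 q] by simp
  then show "coprime q [:0, 1:]"
    by (rule coprime_X)
qed

lemma bez:
  assumes "poly (p::'k::field poly) 0 \<noteq> 0"
  shows "\<exists>a b. a * p + b * [:0, 1:] ^ m = 1"
proof -
  obtain p0 r where p: "p = pCons p0 r" by (cases p)
  then have p0: "p0 \<noteq> 0" using assms by simp
  define s where "s = smult (inverse p0) r"
  define y where "y = - s * [:0, 1:]"
  have e1: "1 - y ^ m = (1 - y) * (\<Sum>i<m. y ^ i)" by (rule one_diff_power_eq)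
  have e2: "1 - y = smult (inverse p0) p"
    using p0 by (simp add: p y_def s_def algebra_simps)
  have e3: "y ^ m = (- s) ^ m * [:0, 1:] ^ m"
    by (simp only: y_def power_mult_distrib)
  have "smult (inverse p0) (\<Sum>i<m. y ^ i) * p + (- s) ^ m * [:0, 1:] ^ m = 1"
    using e1 e2 e3 by (simp add: algebra_simps)
  then show ?thesis by blast
qed


locale fpot2 = fpot scale f for scale :: "'k::field \<Rightarrow> 'v::ab_group_add \<Rightarrow> 'v" and f +
  fixes B :: "'v set" and n :: nat
  assumes finB: "finite B" and rngB: "\<And>v. (f ^^ n) v \<in> span B"
begin

abbreviation "pe p v \<equiv> poly_endo scale p f v"
abbreviation "UU \<equiv> U_part f"
abbreviation "WW \<equiv> W_part scale f"
abbreviation "D \<equiv> drazin scale f"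

lemma W_iff: "w \<in> WW \<longleftrightarrow> (\<exists>p. poly p 0 \<noteq> 0 \<and> pe p w = 0)"
  by (simp add: W_part_def coprime_X_iff)

lemma U_iff: "u \<in> UU \<longleftrightarrow> (\<exists>m. (f ^^ m) u = 0)"
  by (simp add: U_part_def)

lemma fpow_swap: "(f ^^ i) ((f ^^ j) v) = (f ^^ j) ((f ^^ i) v)"
proof -
  have "(f ^^ i) ((f ^^ j) v) = (f ^^ (i + j)) v" by (simp add: funpow_add)
  also have "\<dots> = (f ^^ (j + i)) v" by (simp add: add.commute)
  also have "\<dots> = (f ^^ j) ((f ^^ i) v)" by (simp add: funpow_add)
  finally show ?thesis .
qed

lemma fpow_diff: "(f ^^ k) (x - y) = (f ^^ k) x - (f ^^ k) y"
  using fpow_add[of k "x - y" y] by (simp add: algebra_simps)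

lemma annih: "\<exists>q. q \<noteq> 0 \<and> pe q ((f ^^ n) v) = 0"
proof -
  define g where "g i = (f ^^ i) ((f ^^ n) v)" for i
  have "g i \<in> span B" for i unfolding g_def using rngB[of "(f ^^ i) v"] by (simp add: fpow_swap)
  then obtain k c where gk: "g k = (\<Sum>i<k. scale (c i) (g i))"
    using exists_dep[OF finB] by blast
  define q where "q = monom 1 k - (\<Sum>i<k. monom (c i) i)"
  have "pe q ((f ^^ n) v) = g k - (\<Sum>i<k. scale (c i) (g i))"
    by (simp add: q_def pe_diff_p pe_sum pe_monom g_def)
  also have "\<dots> = 0" using gk by simp
  finally have 1: "pe q ((f ^^ n) v) = 0" .
  have s0: "(\<Sum>i<k. coeff (monom (c i) i) k) = 0"
    by (rule sum.neutral) (auto simp: coeff_monom)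
  have "coeff q k = 1"
    by (simp add: q_def coeff_diff coeff_sum s0 del: coeff_monom) (simp add: coeff_monom)
  then have "q \<noteq> 0" by auto
  with 1 show ?thesis by blast
qed

lemma U_zero: "0 \<in> UU" by (simp add: U_iff exI[of _ 0])
lemma W_zero: "0 \<in> WW" by (auto simp: W_iff intro: exI[of _ 1])

lemma U_add: "u1 \<in> UU \<Longrightarrow> u2 \<in> UU \<Longrightarrow> u1 + u2 \<in> UU"
proof -
  assume "u1 \<in> UU" "u2 \<in> UU"
  then obtain m1 m2 where m: "(f ^^ m1) u1 = 0" "(f ^^ m2) u2 = 0" by (auto simp: U_iff)
  have "(f ^^ (m2 + m1)) u1 = 0" using m by (simp add: funpow_add fpow0)
  moreover have "(f ^^ (m1 + m2)) u2 = 0" using m by (simp add: funpow_add fpow0)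
  ultimately have "(f ^^ (m1 + m2)) (u1 + u2) = 0" by (simp add: fpow_add add.commute)
  then show ?thesis by (auto simp: U_iff)
qed

lemma U_diff: "u1 \<in> UU \<Longrightarrow> u2 \<in> UU \<Longrightarrow> u1 - u2 \<in> UU"
proof -
  assume "u1 \<in> UU" "u2 \<in> UU"
  then obtain m1 m2 where m: "(f ^^ m1) u1 = 0" "(f ^^ m2) u2 = 0" by (auto simp: U_iff)
  have "(f ^^ (m2 + m1)) u1 = 0" using m by (simp add: funpow_add fpow0)
  moreover have "(f ^^ (m1 + m2)) u2 = 0" using m by (simp add: funpow_add fpow0)
  ultimately have "(f ^^ (m1 + m2)) (u1 - u2) = 0" by (simp add: fpow_diff add.commute)
  then show ?thesis by (auto simp: U_iff)
qed

lemma U_scale: "u \<in> UU \<Longrightarrow> scale c u \<in> UU"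
proof -
  assume "u \<in> UU" then obtain m where "(f ^^ m) u = 0" by (auto simp: U_iff)
  then have "(f ^^ m) (scale c u) = 0" by (simp add: fpow_scale)
  then show ?thesis by (auto simp: U_iff)
qed

lemma U_f: "u \<in> UU \<Longrightarrow> f u \<in> UU"
proof -
  assume "u \<in> UU" then obtain m where "(f ^^ m) u = 0" by (auto simp: U_iff)
  then have "(f ^^ m) (f u) = 0" by (simp add: fpow_comm f0)
  then show ?thesis by (auto simp: U_iff)
qed

lemma W_add: "w1 \<in> WW \<Longrightarrow> w2 \<in> WW \<Longrightarrow> w1 + w2 \<in> WW"
proof -
  assume "w1 \<in> WW" "w2 \<in> WW"
  then obtain p1 p2 where p: "poly p1 0 \<noteq> 0" "pe p1 w1 = 0" "poly p2 0 \<noteq> 0" "pe p2 w2 = 0"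
    by (auto simp: W_iff)
  have "pe (p1 * p2) (w1 + w2) = pe (p2 * p1) w1 + pe (p1 * p2) w2"
    by (simp add: pe_add_v mult.commute)
  also have "\<dots> = 0" using p by (simp only: pe_mult) simp
  finally show ?thesis using p by (auto simp: W_iff intro!: exI[of _ "p1 * p2"])
qed

lemma W_diff: "w1 \<in> WW \<Longrightarrow> w2 \<in> WW \<Longrightarrow> w1 - w2 \<in> WW"
proof -
  assume "w1 \<in> WW" "w2 \<in> WW"
  then obtain p1 p2 where p: "poly p1 0 \<noteq> 0" "pe p1 w1 = 0" "poly p2 0 \<noteq> 0" "pe p2 w2 = 0"
    by (auto simp: W_iff)
  have "pe (p1 * p2) (w1 - w2) = pe (p2 * p1) w1 - pe (p1 * p2) w2"
    by (simp add: pe_diff_v mult.commute)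
  also have "\<dots> = 0" using p by (simp only: pe_mult) simp
  finally show ?thesis using p by (auto simp: W_iff intro!: exI[of _ "p1 * p2"])
qed

lemma W_scale: "w \<in> WW \<Longrightarrow> scale c w \<in> WW"
proof -
  assume "w \<in> WW" then obtain p where p: "poly p 0 \<noteq> 0" "pe p w = 0" by (auto simp: W_iff)
  then have "pe p (scale c w) = 0" by (simp add: pe_scale_v)
  then show ?thesis using p(1) by (auto simp: W_iff)
qed

lemma W_f: "w \<in> WW \<Longrightarrow> f w \<in> WW"
proof -
  assume "w \<in> WW" then obtain p where p: "poly p 0 \<noteq> 0" "pe p w = 0" by (auto simp: W_iff)
  then have "pe p (f w) = 0" by (simp add: pe_comm f0)
  then show ?thesis using p(1) by (auto simp: W_iff)
qed

lemma decomp: "\<exists>u w. u \<in> UU \<and> w \<in> WW \<and> v = u + w"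
proof -
  let ?X = "[:0, 1::'k:]"
  obtain q where q: "q \<noteq> 0" "pe q ((f ^^ n) v) = 0" using annih by blast
  obtain P where P: "q = ?X ^ order 0 q * P" "\<not> ?X dvd P"
    using order_decomp[OF q(1), of 0] by auto
  define j where "j = order 0 q"
  have P0: "poly P 0 \<noteq> 0" using P(2) dvd_iff_poly_eq_0[of 0 P] by simp
  define m where "m = j + n"
  have h: "pe (?X ^ m * P) v = 0"
  proof -
    have "?X ^ m * P = q * ?X ^ n" using P(1) by (simp add: m_def j_def power_add ac_simps)
    then have "pe (?X ^ m * P) v = pe q (pe (?X ^ n) v)" by (simp add: pe_mult)
    then show ?thesis using q(2) by (simp add: pe_xpow)
  qed
  have h': "pe (?X ^ m) (pe P v) = 0" using h by (simp only: pe_mult)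
  obtain a b where ab: "a * P + b * ?X ^ m = 1" using bez[OF P0] by blast
  define u where "u = pe (a * P) v"
  define w where "w = pe (b * ?X ^ m) v"
  have "v = pe (a * P + b * ?X ^ m) v" using ab by simp
  then have vuw: "v = u + w" by (simp add: pe_add_p u_def w_def)
  have "(f ^^ m) u = pe (?X ^ m * (a * P)) v" by (simp add: u_def pe_mult pe_xpow)
  also have "\<dots> = pe (a * (?X ^ m * P)) v" by (simp add: ac_simps)
  also have "\<dots> = 0" by (simp only: pe_mult h') simp
  finally have "u \<in> UU" by (auto simp: U_iff)
  have "pe P w = pe (P * (b * ?X ^ m)) v" by (simp add: w_def pe_mult)
  also have "\<dots> = pe (b * (?X ^ m * P)) v" by (simp add: ac_simps)
  also have "\<dots> = 0" by (simp only: pe_mult h') simp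
  finally have "w \<in> WW" using P0 by (auto simp: W_iff)
  show ?thesis using vuw \<open>u \<in> UU\<close> \<open>w \<in> WW\<close> by blast
qed

lemma UW0: "u \<in> UU \<Longrightarrow> u \<in> WW \<Longrightarrow> u = 0"
proof -
  let ?X = "[:0, 1::'k:]"
  assume "u \<in> UU" "u \<in> WW"
  then obtain m P where h: "(f ^^ m) u = 0" "poly P 0 \<noteq> 0" "pe P u = 0"
    by (auto simp: U_iff W_iff)
  obtain a b where ab: "a * P + b * ?X ^ m = 1" using bez[OF h(2)] by blast
  have "u = pe (a * P + b * ?X ^ m) u" using ab by simp
  also have "\<dots> = pe a (pe P u) + pe b (pe (?X ^ m) u)" by (simp add: pe_add_p pe_mult)
  also have "\<dots> = 0" using h by (simp add: pe_xpow)
  finally show ?thesis .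
qed

lemma W_span: "w \<in> WW \<Longrightarrow> w \<in> span B"
proof -
  let ?X = "[:0, 1::'k:]"
  assume "w \<in> WW"
  then obtain P where h: "poly P 0 \<noteq> 0" "pe P w = 0" by (auto simp: W_iff)
  obtain a b where ab: "a * P + b * ?X ^ n = 1" using bez[OF h(1)] by blast
  have "w = pe (a * P + b * ?X ^ n) w" using ab by simp
  also have "\<dots> = pe (a * P) w + pe (?X ^ n * b) w" by (simp only: pe_add_p mult.commute[of b])
  also have "\<dots> = pe a (pe P w) + pe (?X ^ n) (pe b w)" by (simp only: pe_mult)
  also have "\<dots> = (f ^^ n) (pe b w)" using h by (simp add: pe_xpow)
  finally have e: "w = (f ^^ n) (pe b w)" .
  show ?thesis by (subst e) (rule rngB)
qed

lemma W_onto: "w \<in> WW \<Longrightarrow> \<exists>y\<in>WW. w = f y"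
proof -
  let ?X = "[:0, 1::'k:]"
  assume "w \<in> WW"
  then obtain P where h: "poly P 0 \<noteq> 0" "pe P w = 0" by (auto simp: W_iff)
  obtain a b where ab: "a * P + b * ?X ^ 1 = 1" using bez[OF h(1)] by blast
  have "w = pe (a * P + b * ?X ^ 1) w" using ab by simp
  also have "\<dots> = pe (a * P) w + pe (?X * b) w" by (simp only: pe_add_p mult.commute[of b] power_one_right)
  also have "\<dots> = pe a (pe P w) + pe ?X (pe b w)" by (simp only: pe_mult)
  also have "\<dots> = f (pe b w)" using h by simp
  finally have 1: "w = f (pe b w)" .
  have "pe P (pe b w) = pe (P * b) w" by (simp add: pe_mult)
  also have "\<dots> = pe b (pe P w)" by (simp add: pe_mult[symmetric] mult.commute)
  also have "\<dots> = 0" using h by simp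
  finally have "pe b w \<in> WW" using h by (auto simp: W_iff)
  with 1 show ?thesis by blast
qed

lemma f_inj_W: "y1 \<in> WW \<Longrightarrow> y2 \<in> WW \<Longrightarrow> f y1 = f y2 \<Longrightarrow> y1 = y2"
proof -
  assume a: "y1 \<in> WW" "y2 \<in> WW" "f y1 = f y2"
  have "f (y1 - y2) = 0" using a(3) by (simp add: fdiff)
  then have "y1 - y2 \<in> UU" by (auto simp: U_iff intro!: exI[of _ 1])
  moreover have "y1 - y2 \<in> WW" using a W_diff by blast
  ultimately show ?thesis using UW0 by force
qed

lemma D_char: "u \<in> UU \<Longrightarrow> y \<in> WW \<Longrightarrow> D (u + f y) = y"
  unfolding drazin_def
proof (rule the_equality)
  assume u: "u \<in> UU" and y: "y \<in> WW"
  show "y \<in> WW \<and> (\<exists>u'\<in>UU. \<exists>w\<in>WW. u + f y = u' + w \<and> f y = w)"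
    using u y W_f by blast
  fix y' assume "y' \<in> WW \<and> (\<exists>u'\<in>UU. \<exists>w\<in>WW. u + f y = u' + w \<and> f y' = w)"
  then obtain u' w where h: "y' \<in> WW" "u' \<in> UU" "w \<in> WW" "u + f y = u' + w" "f y' = w" by blast
  have "f y - w = u' - u" using h(4) by (simp add: algebra_simps)
  moreover have "f y - w \<in> WW" using W_diff W_f y h(3) by blast
  moreover have "u' - u \<in> UU" using U_diff u h(2) by blast
  ultimately have "f y - w = 0" using UW0 by metis
  then have "f y = f y'" using h(5) by simp
  then show "y' = y" using f_inj_W[OF y h(1)] by simp
qed

lemma D_ex: "\<exists>u\<in>UU. D v \<in> WW \<and> v = u + f (D v)"
proof -
  obtain u w where h: "u \<in> UU" "w \<in> WW" "v = u + w" using decomp by blast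
  obtain y where y: "y \<in> WW" "w = f y" using W_onto[OF h(2)] by blast
  have "D v = y" using D_char[OF h(1) y(1)] h(3) y(2) by simp
  then show ?thesis using h y by blast
qed

lemma D_W: "D v \<in> WW" using D_ex by blast

lemma D_fW: "y \<in> WW \<Longrightarrow> D (f y) = y"
  using D_char[OF U_zero] by simp

lemma D_f: "D (f v) = f (D v)"
proof -
  obtain u where u: "u \<in> UU" "v = u + f (D v)" using D_ex by blast
  have "f u + f (f (D v)) = f (u + f (D v))" by (simp add: fadd)
  also have "\<dots> = f v" by (simp only: u(2)[symmetric])
  finally have "f v = f u + f (f (D v))" by simp
  then show ?thesis using D_char[OF U_f[OF u(1)] W_f[OF D_W]] by simp
qed

lemma D_add: "D (v1 + v2) = D v1 + D v2"
proof -
  obtain u1 where u1: "u1 \<in> UU" "v1 = u1 + f (D v1)" using D_ex by blast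
  obtain u2 where u2: "u2 \<in> UU" "v2 = u2 + f (D v2)" using D_ex by blast
  have "(u1 + u2) + f (D v1 + D v2) = (u1 + f (D v1)) + (u2 + f (D v2))" by (simp add: fadd algebra_simps)
  also have "\<dots> = v1 + v2" by (simp only: u1(2)[symmetric] u2(2)[symmetric])
  finally have "v1 + v2 = (u1 + u2) + f (D v1 + D v2)" by simp
  then show ?thesis using D_char[OF U_add[OF u1(1) u2(1)] W_add[OF D_W D_W]] by simp
qed

lemma D_scale: "D (scale c v) = scale c (D v)"
proof -
  obtain u where u: "u \<in> UU" "v = u + f (D v)" using D_ex by blast
  have "scale c u + f (scale c (D v)) = scale c (u + f (D v))" by (simp add: fscale scale_right_distrib)
  also have "\<dots> = scale c v" by (simp only: u(2)[symmetric])
  finally have "scale c v = scale c u + f (scale c (D v))" by simp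
  then show ?thesis using D_char[OF U_scale[OF u(1)] W_scale[OF D_W]] by simp
qed

lemma core_id: "f (D (f (D (f (D (f v)))))) = f (D (f v))"
  using D_fW[OF D_W] by simp

lemma core_comm: "D (f (D (f x))) = f (D (f (D x)))"
  using D_fW[OF D_W] D_f by simp

end


theorem corollary3p6:
  fixes scale :: "'k::field \<Rightarrow> 'v::ab_group_add \<Rightarrow> 'v"
    and \<phi> :: "'v \<Rightarrow> 'v"
  assumes "vector_space scale"
    and "finite_potent scale \<phi>"
  shows "G_drazin_inverse scale (core_part scale \<phi>) (drazin scale \<phi>)"
proof -
  from assms(2) obtain n B where lin: "Vector_Spaces.linear scale scale \<phi>" and fB: "finite B"
    and rB: "range (\<phi> ^^ n) \<subseteq> module.span scale B"
    unfolding finite_potent_def endo_def fin_dim_set_def by blast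
  have add: "\<And>x y. \<phi> (x + y) = \<phi> x + \<phi> y" using lin by (simp add: Vector_Spaces.linear_iff)
  have sc: "\<And>c x. \<phi> (scale c x) = scale c (\<phi> x)" using lin by (simp add: Vector_Spaces.linear_iff)
  have rB': "\<And>v. (\<phi> ^^ n) v \<in> module.span scale B" using rB by auto
  interpret fpot2 scale \<phi> B n
    by (intro fpot2.intro fpot.intro fpot2_axioms.intro fpot_axioms.intro assms(1) add sc fB rB')
  have linD: "Vector_Spaces.linear scale scale D"
    using D_add D_scale assms(1) by (simp add: Vector_Spaces.linear_iff)
  have lincore: "Vector_Spaces.linear scale scale (core_part scale \<phi>)"
    unfolding core_part_def by (rule Vector_Spaces.linear_compose[OF lin Vector_Spaces.linear_compose[OF linD lin]])
  have comm: "D (core_part scale \<phi> x) = core_part scale \<phi> (D x)" for x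
    by (simp add: core_part_def core_comm)
  have commk: "D \<circ> (core_part scale \<phi> ^^ k) = (core_part scale \<phi> ^^ k) \<circ> D" for k
  proof (induction k)
    case 0 then show ?case by simp
  next
    case (Suc k)
    show ?case
    proof
      fix x
      have "D ((core_part scale \<phi> ^^ k) x) = (core_part scale \<phi> ^^ k) (D x)"
        using Suc.IH by (metis comp_apply)
      then show "(D \<circ> (core_part scale \<phi> ^^ Suc k)) x = ((core_part scale \<phi> ^^ Suc k) \<circ> D) x"
        by (simp add: comm)
    qed
  qed
  have rng: "range (core_part scale \<phi> ^^ 1) \<subseteq> module.span scale B"
  proof
    fix y assume "y \<in> range (core_part scale \<phi> ^^ 1)"
    then obtain x where "y = \<phi> (D (\<phi> x))" by (auto simp: core_part_def)
    moreover have "\<phi> (D (\<phi> x)) \<in> WW" by (rule W_f[OF D_W])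
    ultimately show "y \<in> module.span scale B" using W_span by simp
  qed
  have cid: "core_part scale \<phi> \<circ> D \<circ> core_part scale \<phi> = core_part scale \<phi>"
    by (rule ext) (simp add: core_part_def core_id)
  show ?thesis
    unfolding G_drazin_inverse_def finite_potent_def endo_def fin_dim_set_def
    using lincore linD rng fB cid commk by blast
qed

end
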